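(* Suppose $G$ is a graph which is not bipartite and which $(\Delta,\beta,d,k)$-expands into $W\subseteq V(G)$, where $\Delta\geq 4$, $k\geq 2$ and $\beta\geq 8\Delta$. Then $G$ contains an odd cycle $C$ of length at most $88\log k\log|G|$ such that $G$ also $(\Delta-3,\beta,d,k)$-expands into $W\setminus V(C)$.
   Context: All logarithms are natural; $|G|$ is the number of vertices. For $S\subseteq V(G)$, $N_G(S)=\{w\in V(G)\setminus S: vw\in E(G)\text{ for some }v\in S\}$. A graph $G$ $(\Delta,\beta,d,k)$-expands into $W\subseteq V(G)$ if (a) $|N_G(S)\cap W|\geq\Delta|S|$ for every $S\subseteq V(G)$ with $|S|\leq\beta d$, and (b) $|N_G(S)|\geq|S|/(10\log k)$ for every $S\subseteq V(G)$ with $\beta d\leq|S|\leq|G|/2$. *)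

theory Defs
  imports Complex_Main
begin

definition simple_graph :: "'a set \<Rightarrow> 'a set set \<Rightarrow> bool" where
  "simple_graph V E \<longleftrightarrow> finite V \<and> (\<forall>e\<in>E. \<exists>u v. e = {u, v} \<and> u \<noteq> v \<and> u \<in> V \<and> v \<in> V)"

definition adj :: "'a set set \<Rightarrow> 'a \<Rightarrow> 'a \<Rightarrow> bool" where
  "adj E u v \<longleftrightarrow> {u, v} \<in> E"

definition nbhd :: "'a set \<Rightarrow> 'a set set \<Rightarrow> 'a set \<Rightarrow> 'a set" where
  "nbhd V E S = {w \<in> V - S. \<exists>v\<in>S. adj E v w}"

definition bipartite :: "'a set \<Rightarrow> 'a set set \<Rightarrow> bool" where
  "bipartite V E \<longleftrightarrow> (\<exists>A B. A \<union> B = V \<and> A \<inter> B = {} \<and>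
      (\<forall>u v. adj E u v \<longrightarrow> (u \<in> A \<and> v \<in> B) \<or> (u \<in> B \<and> v \<in> A)))"

definition expands_into ::
  "'a set \<Rightarrow> 'a set set \<Rightarrow> real \<Rightarrow> real \<Rightarrow> real \<Rightarrow> real \<Rightarrow> 'a set \<Rightarrow> bool" where
  "expands_into V E \<Delta> \<beta> d k W \<longleftrightarrow>
     (\<forall>S. S \<subseteq> V \<and> real (card S) \<le> \<beta> * d \<longrightarrow>
          real (card (nbhd V E S \<inter> W)) \<ge> \<Delta> * real (card S)) \<and>
     (\<forall>S. S \<subseteq> V \<and> \<beta> * d \<le> real (card S) \<and> real (card S) \<le> real (card V) / 2 \<longrightarrow>
          real (card (nbhd V E S)) \<ge> real (card S) / (10 * ln k))"

text \<open>A cycle given by its cyclic vertex sequence; its length is the number of vertices.\<close>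
definition is_cycle :: "'a set \<Rightarrow> 'a set set \<Rightarrow> 'a list \<Rightarrow> bool" where
  "is_cycle V E cs \<longleftrightarrow> length cs \<ge> 3 \<and> distinct cs \<and> set cs \<subseteq> V \<and>
     (\<forall>i < length cs. adj E (cs ! i) (cs ! ((i + 1) mod length cs)))"

end

theory Submission
  imports Defs
begin

lemma adj_sym: "adj E u v \<Longrightarrow> adj E v u"
  unfolding adj_def by (simp add: insert_commute)

lemma adj_V: "simple_graph V E \<Longrightarrow> adj E u v \<Longrightarrow> u \<in> V \<and> v \<in> V \<and> u \<noteq> v"
  unfolding simple_graph_def adj_def by (smt (verit) doubleton_eq_iff insert_absorb2)

lemma periodic_walk:
  assumes "\<forall>n. adj E (f n) (f (Suc n))" "f a = f (a + q)" "q > 0"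
  shows "adj E (f (a + n mod q)) (f (a + Suc n mod q))"
proof (cases "Suc (n mod q) = q")
  case True
  then have "Suc n mod q = 0" by (simp add: mod_Suc)
  have "Suc (a + n mod q) = a + q" using True by simp
  then show ?thesis using assms(1)[rule_format, of "a + n mod q"] assms(2) \<open>Suc n mod q = 0\<close>
    by (metis add.right_neutral)
next
  case False
  then have "Suc n mod q = Suc (n mod q)" by (simp add: mod_Suc)
  then show ?thesis using assms(1)[rule_format, of "a + n mod q"] by simp
qed

lemma odd_closed_walk:
  assumes sg: "simple_graph V E"
  shows "odd p \<Longrightarrow> (\<forall>i<p. adj E (f i) (f (Suc i))) \<Longrightarrow> f p = f 0 \<Longrightarrow>
    \<exists>C. is_cycle V E C \<and> odd (length C) \<and> length C \<le> p"
proof (induction p arbitrary: f rule: less_induct)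
  case (less p)
  have p0: "p > 0" using less.prems(1) by (cases p) auto
  define g where "g n = f (n mod p)" for n
  have gw: "\<forall>n. adj E (g n) (g (Suc n))"
  proof
    fix n
    have lt: "n mod p < p" using p0 by simp
    show "adj E (g n) (g (Suc n))"
    proof (cases "Suc (n mod p) = p")
      case True
      then have "Suc n mod p = 0" by (simp add: mod_Suc)
      then show ?thesis using less.prems(2) lt less.prems(3) True unfolding g_def by metis
    next
      case False
      then have "Suc n mod p = Suc (n mod p)" by (simp add: mod_Suc)
      then show ?thesis using less.prems(2) lt unfolding g_def by simp
    qed
  qed
  have gmod: "g (n mod p) = g n" for n unfolding g_def by simp
  have gp: "g (n + p) = g n" for n unfolding g_def by simp
  have gV: "g n \<in> V" for n using adj_V[OF sg gw[rule_format, of n]] by simp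
  show ?case
  proof (cases "inj_on g {0..<p}")
    case True
    let ?C = "map g [0..<p]"
    have p1: "p \<noteq> 1"
    proof
      assume "p = 1"
      then have "g 1 = g 0" using gp[of 0] by simp
      then show False using adj_V[OF sg gw[rule_format, of 0]] by simp
    qed
    have p3: "p \<ge> 3" using p0 p1 less.prems(1) by presburger
    have "is_cycle V E ?C"
      unfolding is_cycle_def
    proof (intro conjI allI impI)
      show "3 \<le> length ?C" using p3 by simp
      show "distinct ?C" using True by (simp add: distinct_map)
      show "set ?C \<subseteq> V" using gV by auto
      fix i assume "i < length ?C"
      then have i: "i < p" by simp
      have "?C ! ((i + 1) mod length ?C) = g (i+1)"
        using gmod[of "i+1"] p0 by simp
      moreover have "?C ! i = g i" using i by simp
      ultimately show "adj E (?C ! i) (?C ! ((i + 1) mod length ?C))" using gw by simp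
    qed
    then show ?thesis using less.prems(1) by (intro exI[of _ ?C]) simp
  next
    case False
    then obtain i j where ij: "i < j" "j < p" "g i = g j"
      unfolding inj_on_def by (metis atLeastLessThan_iff linorder_neqE_nat)
    define q1 where "q1 = j - i"
    define q2 where "q2 = p - q1"
    have q1p: "0 < q1" "q1 < p" using ij unfolding q1_def by auto
    have q2p: "0 < q2" "q2 < p" using ij unfolding q2_def q1_def by auto
    have sum: "q1 + q2 = p" using q1p unfolding q2_def by simp
    define h1 where "h1 n = g (i + n mod q1)" for n
    define h2 where "h2 n = g (j + n mod q2)" for n
    have e1: "g i = g (i + q1)" using ij unfolding q1_def by simp
    have e2: "g j = g (j + q2)"
    proof -
      have "j + q2 = i + p" using ij unfolding q2_def q1_def by simp
      then show ?thesis using gp[of i] ij by simp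
    qed
    have h1w: "\<forall>n<q1. adj E (h1 n) (h1 (Suc n))"
      unfolding h1_def using periodic_walk[OF gw e1 q1p(1)] by blast
    have h2w: "\<forall>n<q2. adj E (h2 n) (h2 (Suc n))"
      unfolding h2_def using periodic_walk[OF gw e2 q2p(1)] by blast
    have h1c: "h1 q1 = h1 0" unfolding h1_def by simp
    have h2c: "h2 q2 = h2 0" unfolding h2_def by simp
    show ?thesis
    proof (cases "odd q1")
      case True
      from less.IH[OF q1p(2) True h1w h1c] show ?thesis using q1p by fastforce
    next
      case False
      then have "odd q2" using sum less.prems(1) by presburger
      from less.IH[OF q2p(2) this h2w h2c] show ?thesis using q2p by fastforce
    qed
  qed
qed


definition walkto :: "'a set set \<Rightarrow> 'a \<Rightarrow> 'a \<Rightarrow> nat \<Rightarrow> bool" where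
  "walkto E v x n \<longleftrightarrow> (\<exists>f. f 0 = v \<and> f n = x \<and> (\<forall>i<n. adj E (f i) (f (Suc i))))"

definition ball :: "'a set set \<Rightarrow> 'a \<Rightarrow> nat \<Rightarrow> 'a set" where
  "ball E v r = {x. \<exists>n\<le>r. walkto E v x n}"

lemma walkto_0: "walkto E v v 0"
  unfolding walkto_def by (intro exI[of _ "\<lambda>_. v"]) simp

lemma walkto_snoc: "walkto E v x n \<Longrightarrow> adj E x y \<Longrightarrow> walkto E v y (Suc n)"
  unfolding walkto_def
proof (elim exE conjE)
  fix f assume f: "f 0 = v" "f n = x" "\<forall>i<n. adj E (f i) (f (Suc i))" and a: "adj E x y"
  show "\<exists>f. f 0 = v \<and> f (Suc n) = y \<and> (\<forall>i<Suc n. adj E (f i) (f (Suc i)))"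
    apply (rule exI[of _ "f(Suc n := y)"])
    using f a by (auto simp: less_Suc_eq)
qed

lemma walkto_rev: "walkto E v x n \<Longrightarrow> walkto E x v n"
  unfolding walkto_def
proof (elim exE conjE)
  fix f assume f: "f 0 = v" "f n = x" "\<forall>i<n. adj E (f i) (f (Suc i))"
  show "\<exists>f. f 0 = x \<and> f n = v \<and> (\<forall>i<n. adj E (f i) (f (Suc i)))"
  proof (rule exI[of _ "\<lambda>i. f (n - i)"], intro conjI allI impI)
    fix i assume i: "i < n"
    have "adj E (f (n - Suc i)) (f (Suc (n - Suc i)))" using f(3) i by simp
    moreover have "Suc (n - Suc i) = n - i" using i by simp
    ultimately show "adj E (f (n - i)) (f (n - Suc i))" using adj_sym by metis
  qed (use f in auto)
qed

lemma walkto_trans: "walkto E v x n \<Longrightarrow> walkto E x y m \<Longrightarrow> walkto E v y (n + m)"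
  unfolding walkto_def
proof (elim exE conjE)
  fix f g assume f: "f 0 = v" "f n = x" "\<forall>i<n. adj E (f i) (f (Suc i))"
    and g: "g 0 = x" "g m = y" "\<forall>i<m. adj E (g i) (g (Suc i))"
  show "\<exists>f. f 0 = v \<and> f (n + m) = y \<and> (\<forall>i<n + m. adj E (f i) (f (Suc i)))"
  proof (rule exI[of _ "\<lambda>i. if i \<le> n then f i else g (i - n)"], intro conjI allI impI)
    fix i assume i: "i < n + m"
    show "adj E (if i \<le> n then f i else g (i - n)) (if Suc i \<le> n then f (Suc i) else g (Suc i - n))"
    proof (cases "i < n")
      case True then show ?thesis using f by simp
    next
      case False
      then have s: "Suc i - n = Suc (i - n)" "\<not> Suc i \<le> n" by simp_all
      have "i - n < m" using i False by simp
      then have a: "adj E (g (i - n)) (g (Suc (i - n)))" using g(3) by blast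
      show ?thesis
      proof (cases "i = n")
        case True then show ?thesis using a s f(2) g(1) by simp
      next
        case False
        then have "\<not> i \<le> n" using \<open>\<not> i < n\<close> by simp
        then show ?thesis using a s by simp
      qed
    qed
  next
    show "(if 0 \<le> n then f 0 else g (0 - n)) = v" using f by simp
  next
    show "(if n + m \<le> n then f (n + m) else g (n + m - n)) = y" using f g by (cases m) auto
  qed
qed

lemma walkto_V: "simple_graph V E \<Longrightarrow> v \<in> V \<Longrightarrow> walkto E v x n \<Longrightarrow> x \<in> V"
  unfolding walkto_def
proof (elim exE conjE)
  fix f assume sg: "simple_graph V E" "v \<in> V" and f: "f 0 = v" "f n = x" "\<forall>i<n. adj E (f i) (f (Suc i))"
  show "x \<in> V"
  proof (cases n)
    case 0 then show ?thesis using f sg by simp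
  next
    case (Suc m)
    then have "adj E (f m) (f n)" using f(3) by simp
    then show ?thesis using adj_V[OF sg(1), of "f m" "f n"] f(2) by blast
  qed
qed

lemma ball_sub: "simple_graph V E \<Longrightarrow> v \<in> V \<Longrightarrow> ball E v r \<subseteq> V"
  unfolding ball_def using walkto_V[of V E v] by auto

lemma ball_mono: "r \<le> s \<Longrightarrow> ball E v r \<subseteq> ball E v s"
  unfolding ball_def using le_trans by blast

lemma ball_0: "ball E v 0 = {v}"
  unfolding ball_def walkto_def by auto

lemma nbhd_ball: "ball E v r \<union> nbhd V E (ball E v r) \<subseteq> ball E v (Suc r)"
proof -
  have "nbhd V E (ball E v r) \<subseteq> ball E v (Suc r)"
  proof
    fix y assume "y \<in> nbhd V E (ball E v r)"
    then obtain x n where "n \<le> r" "walkto E v x n" "adj E x y" unfolding nbhd_def ball_def by auto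
    then show "y \<in> ball E v (Suc r)" unfolding ball_def using walkto_snoc[of E v x n y] by auto
  qed
  then show ?thesis using ball_mono[of r "Suc r" E v] by simp
qed

lemma ball_card:
  assumes "simple_graph V E" "v \<in> V"
  shows "card (ball E v r) + card (nbhd V E (ball E v r)) \<le> card (ball E v (Suc r))"
proof -
  have fin: "finite V" using assms(1) unfolding simple_graph_def by simp
  have f1: "finite (ball E v (Suc r))" using ball_sub[OF assms] fin finite_subset by blast
  have "card (ball E v r) + card (nbhd V E (ball E v r)) = card (ball E v r \<union> nbhd V E (ball E v r))"
    apply (rule card_Un_disjoint[symmetric])
    using f1 nbhd_ball[of E v r V] finite_subset apply blast
    using f1 nbhd_ball[of E v r V] finite_subset apply blast
    unfolding nbhd_def by auto
  also have "\<dots> \<le> card (ball E v (Suc r))"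
    by (rule card_mono[OF f1 nbhd_ball])
  finally show ?thesis .
qed


lemma card3: "card {a, b, c :: nat} \<le> 3"
  by (simp add: card_insert_if)

lemma pair_arith: assumes 1: "odd (b - a + 2) \<longrightarrow> L \<le> b - a + 2" and 2: "odd (a + L - b + 2) \<longrightarrow> L \<le> a + L - b + 2"
  and oL: "odd (L::nat)" and ab: "a < b" "b < L" shows "b = a + 2 \<or> b = a + L - 2"
proof -
  obtain k where k: "L = 2*k+1" using oL oddE by blast
  obtain d where d: "b = a + d" using ab less_imp_add_positive by blast
  have dl: "d < L" "d > 0" using ab d by auto
  obtain e where e: "L = d + e" using dl less_imp_add_positive by blast
  have e1: "b - a + 2 = d + 2" using d by simp
  have e2: "a + L - b + 2 = e + 2" using d e by simp
  show ?thesis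
  proof (cases "even d")
    case True
    then obtain m where m: "d = 2*m" by blast
    have "e = 2*(k-m) + 1" using k m e by simp
    then have "odd (a + L - b + 2)" using e2 by simp
    then have "L \<le> e + 2" using 2 e2 by simp
    then have "d \<le> 2" using e by linarith
    then have "m = 1" using m dl by linarith
    then show ?thesis using d m by simp
  next
    case False
    then obtain m where m: "d = 2*m+1" using oddE by blast
    have "odd (b - a + 2)" using e1 m by simp
    then have "L \<le> d + 2" using 1 e1 by simp
    then have "k \<le> m + 1" "m < k" using k m dl by linarith+
    then have "k = m + 1" by linarith
    then have "b = a + L - 2" using k m d by simp
    then show ?thesis by simp
  qed
qed

lemma img_nth: "{c \<in> set C. P c} = (\<lambda>i. C ! i) ` {i. i < length C \<and> P (C ! i)}"
  by (auto simp: in_set_conv_nth)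

lemma nbr_cycle:
  assumes sg: "simple_graph V E" and cyc: "is_cycle V E C" and oddC: "odd (length C)"
    and min: "\<forall>C'. is_cycle V E C' \<and> odd (length C') \<longrightarrow> length C \<le> length C'"
  shows "card {c \<in> set C. adj E y c} \<le> 3"
proof -
  define L where "L = length C"
  have L3: "L \<ge> 3" using cyc unfolding is_cycle_def L_def by simp
  define c where "c n = C ! (n mod L)" for n
  have cw: "adj E (c n) (c (Suc n))" for n
  proof -
    have "n mod L < L" using L3 by simp
    then have "adj E (C ! (n mod L)) (C ! ((n mod L + 1) mod L))"
      using cyc unfolding is_cycle_def L_def by blast
    moreover have "(n mod L + 1) mod L = Suc n mod L" by (simp add: mod_Suc_eq)
    ultimately show ?thesis unfolding c_def by simp
  qed
  have wl: "L \<le> t - s + 2" if st: "s \<le> t" and ys: "adj E y (c s)" and yt: "adj E y (c t)"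
    and od: "odd (t - s + 2)" for s t
  proof -
    define p where "p = t - s + 2"
    define f where "f n = (if n = 0 then y else if n \<le> t - s + 1 then c (s + n - 1) else y)" for n
    have fw: "\<forall>i<p. adj E (f i) (f (Suc i))"
    proof (intro allI impI)
      fix i assume i: "i < p"
      show "adj E (f i) (f (Suc i))"
      proof (cases "i = 0")
        case True then show ?thesis unfolding f_def using ys by simp
      next
        case False
        show ?thesis
        proof (cases "i = t - s + 1")
          case True
          then have "f i = c t" "f (Suc i) = y" unfolding f_def using st by auto
          then show ?thesis using yt adj_sym by metis
        next
          case False
          then have "i \<le> t - s" using i \<open>i \<noteq> 0\<close> unfolding p_def by simp
          then have "f i = c (s + i - 1)" "f (Suc i) = c (Suc (s + i - 1))" unfolding f_def
            using \<open>i \<noteq> 0\<close> by auto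
          then show ?thesis using cw by simp
        qed
      qed
    qed
    have "f p = f 0" unfolding f_def p_def by simp
    from odd_closed_walk[OF sg, of p f] od fw this obtain C' where
      "is_cycle V E C'" "odd (length C')" "length C' \<le> p" unfolding p_def by blast
    then show ?thesis using min unfolding L_def p_def by fastforce
  qed
  have pair: "b = a + 2 \<or> b = a + L - 2" if ab: "a < b" "b < L" and ya: "adj E y (C ! a)"
    and yb: "adj E y (C ! b)" for a b
  proof -
    have ca: "c a = C ! a" "c (a + L) = C ! a" "c b = C ! b" unfolding c_def using ab by auto
    have oL: "odd L" using oddC unfolding L_def by simp
    have 1: "odd (b - a + 2) \<Longrightarrow> L \<le> b - a + 2"
      using wl[of a b] ab ya yb ca by simp
    have 2: "odd (a + L - b + 2) \<Longrightarrow> L \<le> a + L - b + 2"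
      using wl[of b "a + L"] ab ya yb ca by simp
    show ?thesis using pair_arith[of b a L] 1 2 oL ab by blast
  qed
  define I where "I = {i. i < L \<and> adj E y (C ! i)}"
  have finI: "finite I" unfolding I_def by simp
  have img: "{c \<in> set C. adj E y c} = (\<lambda>i. C ! i) ` I"
    unfolding I_def L_def by (rule img_nth)
  have "card {c \<in> set C. adj E y c} \<le> card I" unfolding img by (rule card_image_le[OF finI])
  also have "card I \<le> 3"
  proof (cases "I = {}")
    case True then show ?thesis by simp
  next
    case False
    define a where "a = Min I"
    have aI: "a \<in> I" unfolding a_def using Min_in[OF finI False] .
    have "I \<subseteq> {a, a + 2, a + L - 2}"
    proof
      fix i assume iI: "i \<in> I"
      have "a \<le> i" unfolding a_def using Min_le[OF finI iI] .
      show "i \<in> {a, a + 2, a + L - 2}"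
      proof (cases "a = i")
        case True then show ?thesis by simp
      next
        case False
        then have "a < i" using \<open>a \<le> i\<close> by simp
        then show ?thesis using pair[of a i] aI iI unfolding I_def by auto
      qed
    qed
    then have "card I \<le> card {a, a + 2, a + L - 2}" by (rule card_mono[rotated]) simp
    then show ?thesis using card3 le_trans by blast
  qed
  finally show ?thesis .
qed


theorem lemma4p4:
  fixes V :: "'a set" and E :: "'a set set" and W :: "'a set"
    and \<Delta> \<beta> d k :: real
  assumes "simple_graph V E"
    and "\<not> bipartite V E"
    and "W \<subseteq> V"
    and "expands_into V E \<Delta> \<beta> d k W"
    and "\<Delta> \<ge> 4" and "k \<ge> 2" and "\<beta> \<ge> 8 * \<Delta>"
  shows "\<exists>C. is_cycle V E C \<and> odd (length C) \<and>
           real (length C) \<le> 88 * ln k * ln (real (card V)) \<and>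
           expands_into V E (\<Delta> - 3) \<beta> d k (W - set C)"
proof -
  note sg = assms(1)
  have finV: "finite V" using sg unfolding simple_graph_def by simp
  have ea: "\<Delta> * real (card S) \<le> real (card (nbhd V E S \<inter> W))"
    if "S \<subseteq> V" "real (card S) \<le> \<beta> * d" for S
    using assms(4) that unfolding expands_into_def by blast
  have eb: "real (card S) / (10 * ln k) \<le> real (card (nbhd V E S))"
    if "S \<subseteq> V" "\<beta> * d \<le> real (card S)" "real (card S) \<le> real (card V) / 2" for S
    using assms(4) that unfolding expands_into_def by blast
  define K where "K = ln k"
  have ln2: "ln (2::real) \<ge> 1/2" using ln_diff_le[of 1 2] by simp
  have "ln (2::real) \<le> ln k" using assms(6) by simp
  then have K2: "K \<ge> 1/2" unfolding K_def using ln2 by linarith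
  define x where "x = 1 / (10 * K)"
  have x0: "0 < x" "x \<le> 1/5" using K2 unfolding x_def by (auto simp: field_simps)
  define n where "n = card V"
  have nbS: "x * real (card S) \<le> real (card (nbhd V E S))"
    if S: "S \<subseteq> V" "real (card S) \<le> real n / 2" for S
  proof (cases "real (card S) \<le> \<beta> * d")
    case True
    have "nbhd V E S \<subseteq> V" unfolding nbhd_def by auto
    then have "finite (nbhd V E S)" using finV finite_subset by blast
    then have "card (nbhd V E S \<inter> W) \<le> card (nbhd V E S)" by (simp add: card_mono)
    moreover have "x * real (card S) \<le> \<Delta> * real (card S)"
      using x0 assms(5) by (intro mult_right_mono) auto
    ultimately show ?thesis using ea[OF S(1) True] by linarith
  next
    case False
    have "real (card S) / (10 * ln k) \<le> real (card (nbhd V E S))"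
      using eb[OF S(1)] False S(2) unfolding n_def by simp
    moreover have "x * real (card S) = real (card S) / (10 * ln k)" unfolding x_def K_def by simp
    ultimately show ?thesis by simp
  qed
  have grow: "(1 + x) * real (card (ball E v r)) \<le> real (card (ball E v (Suc r)))"
    if v: "v \<in> V" and h: "real (card (ball E v r)) \<le> real n / 2" for v r
  proof -
    have "x * real (card (ball E v r)) \<le> real (card (nbhd V E (ball E v r)))"
      using nbS[OF ball_sub[OF sg v] h] .
    moreover have "real (card (ball E v r)) + real (card (nbhd V E (ball E v r))) \<le> real (card (ball E v (Suc r)))"
      using ball_card[OF sg v, of r] by linarith
    ultimately show ?thesis by (simp add: algebra_simps)
  qed
  have fin_ball: "finite (ball E v r)" if "v \<in> V" for v r
    using ball_sub[OF sg that] finV finite_subset by blast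
  have pow: "(1 + x) ^ r \<le> real (card (ball E v r))"
    if v: "v \<in> V" and h: "real (card (ball E v r)) \<le> real n / 2" for v r
    using h
  proof (induction r)
    case 0
    then show ?case by (simp add: ball_0)
  next
    case (Suc r)
    have "card (ball E v r) \<le> card (ball E v (Suc r))"
      by (rule card_mono[OF fin_ball[OF v] ball_mono]) simp
    then have h': "real (card (ball E v r)) \<le> real n / 2" using Suc.prems by linarith
    have "(1 + x) ^ Suc r = (1 + x) * (1 + x) ^ r" by simp
    also have "\<dots> \<le> (1 + x) * real (card (ball E v r))"
      using Suc.IH[OF h'] x0 by (intro mult_left_mono) auto
    also have "\<dots> \<le> real (card (ball E v (Suc r)))" using grow[OF v h'] .
    finally show ?case .
  qed
  have lnx: "ln (1 + x) > 0" using x0 by simp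
  have V0: "V \<noteq> {}"
  proof
    assume "V = {}"
    then have "bipartite V E" unfolding bipartite_def using adj_V[OF sg] by blast
    then show False using assms(2) by simp
  qed
  then obtain v0 where v0: "v0 \<in> V" by blast
  have n1: "n \<ge> 1" using V0 finV unfolding n_def by (simp add: Suc_le_eq card_gt_0_iff)
  define R0 where "R0 = nat \<lceil>ln (real n) / ln (1 + x)\<rceil>"
  have lnn: "ln (real n) \<ge> 0" using n1 by simp
  have R0ge: "ln (real n) / ln (1 + x) \<le> real R0" unfolding R0_def by linarith
  have R0le: "real R0 \<le> ln (real n) / ln (1 + x) + 1"
  proof -
    have "0 \<le> ln (real n) / ln (1 + x)" using lnn lnx by simp
    then have "real R0 = of_int \<lceil>ln (real n) / ln (1 + x)\<rceil>" unfolding R0_def by simp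
    then show ?thesis by linarith
  qed
  have powR: "real n \<le> (1 + x) ^ R0"
  proof -
    have "ln (real n) \<le> real R0 * ln (1 + x)" using R0ge lnx by (simp add: field_simps)
    then have "exp (ln (real n)) \<le> exp (real R0 * ln (1 + x))" by simp
    moreover have "exp (ln (real n)) = real n" using n1 by simp
    moreover have "exp (real R0 * ln (1 + x)) = (1 + x) ^ R0"
      using x0 by (simp add: exp_of_nat_mult)
    ultimately show ?thesis by simp
  qed
  have big: "real n / 2 < real (card (ball E v R0))" if v: "v \<in> V" for v
  proof (rule ccontr)
    assume "\<not> ?thesis"
    then have "real (card (ball E v R0)) \<le> real n / 2" by simp
    with pow[OF v this] powR n1 show False by simp
  qed
  have reach: "\<exists>m \<le> 2 * R0. walkto E v y m" if v: "v \<in> V" and y: "y \<in> V" for v y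
  proof -
    have "ball E v R0 \<inter> ball E y R0 \<noteq> {}"
    proof
      assume dis: "ball E v R0 \<inter> ball E y R0 = {}"
      have "card (ball E v R0 \<union> ball E y R0) = card (ball E v R0) + card (ball E y R0)"
        using card_Un_disjoint[OF fin_ball[OF v] fin_ball[OF y] dis] .
      moreover have "card (ball E v R0 \<union> ball E y R0) \<le> n"
        unfolding n_def using ball_sub[OF sg v] ball_sub[OF sg y] finV by (intro card_mono) auto
      ultimately show False using big[OF v] big[OF y] by linarith
    qed
    then obtain z where z: "z \<in> ball E v R0" "z \<in> ball E y R0" by blast
    then obtain m1 m2 where m: "m1 \<le> R0" "m2 \<le> R0" "walkto E v z m1" "walkto E y z m2"
      unfolding ball_def by blast
    have "walkto E v y (m1 + m2)" using walkto_trans[OF m(3) walkto_rev[OF m(4)]] .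
    then show ?thesis using m by (intro exI[of _ "m1 + m2"]) simp
  qed
  define dist where "dist y = (LEAST m. walkto E v0 y m)" for y
  have dist_w: "walkto E v0 y (dist y) \<and> dist y \<le> 2 * R0" if y: "y \<in> V" for y
  proof -
    obtain m where m: "m \<le> 2 * R0" "walkto E v0 y m" using reach[OF v0 y] by blast
    have "walkto E v0 y (dist y)" unfolding dist_def using m(2) by (rule LeastI)
    moreover have "dist y \<le> m" unfolding dist_def using m(2) by (rule Least_le)
    ultimately show ?thesis using m(1) by simp
  qed
  have dist_adj: "dist w \<le> dist u + 1" if a: "adj E u w" for u w
  proof -
    have "u \<in> V" using adj_V[OF sg a] by simp
    have "walkto E v0 w (Suc (dist u))" using walkto_snoc[OF conjunct1[OF dist_w[OF \<open>u \<in> V\<close>]] a] .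
    then have "dist w \<le> Suc (dist u)" unfolding dist_def by (rule Least_le)
    then show ?thesis by simp
  qed
  have "\<exists>u w. adj E u w \<and> dist u = dist w"
  proof (rule ccontr)
    assume nex: "\<not> (\<exists>u w. adj E u w \<and> dist u = dist w)"
    have neq: "dist u \<noteq> dist w" if "adj E u w" for u w using nex that by blast
    define A where "A = {y \<in> V. even (dist y)}"
    define B where "B = {y \<in> V. odd (dist y)}"
    have AB: "(a \<in> A \<and> b \<in> B) \<or> (a \<in> B \<and> b \<in> A)" if ab: "adj E a b" for a b
    proof -
      have "dist b \<le> dist a + 1" "dist a \<le> dist b + 1" "dist a \<noteq> dist b"
        using dist_adj[OF ab] dist_adj[OF adj_sym[OF ab]] neq[OF ab] by auto
      then have "dist b = dist a + 1 \<or> dist a = dist b + 1" by linarith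
      then have "even (dist a) \<longleftrightarrow> odd (dist b)" by auto
      then show ?thesis using adj_V[OF sg ab] unfolding A_def B_def by auto
    qed
    have "A \<union> B = V" "A \<inter> B = {}" unfolding A_def B_def by auto
    then have "bipartite V E" unfolding bipartite_def using AB by blast
    then show False using assms(2) by simp
  qed
  then obtain u w where uw: "adj E u w" "dist u = dist w" by blast
  define j where "j = dist u"
  have uV: "u \<in> V" "w \<in> V" using adj_V[OF sg uw(1)] by auto
  obtain f1 where f1: "f1 0 = v0" "f1 j = u" "\<forall>i<j. adj E (f1 i) (f1 (Suc i))"
    using dist_w[OF uV(1)] unfolding j_def walkto_def by blast
  obtain f2 where f2: "f2 0 = v0" "f2 j = w" "\<forall>i<j. adj E (f2 i) (f2 (Suc i))"
    using dist_w[OF uV(2)] uw(2) unfolding j_def walkto_def by auto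
  have jR: "j \<le> 2 * R0" using dist_w[OF uV(1)] unfolding j_def by simp
  define g where "g i = (if i \<le> j then f1 i else f2 (2 * j + 1 - i))" for i
  have gw: "\<forall>i<2 * j + 1. adj E (g i) (g (Suc i))"
  proof (intro allI impI)
    fix i assume i: "i < 2 * j + 1"
    show "adj E (g i) (g (Suc i))"
    proof (cases "i < j")
      case True then show ?thesis unfolding g_def using f1 by simp
    next
      case False
      show ?thesis
      proof (cases "i = j")
        case True then show ?thesis unfolding g_def using f1 f2 uw by simp
      next
        case False
        then have ij: "j < i" using \<open>\<not> i < j\<close> by simp
        define t where "t = 2 * j - i"
        have t: "t < j" "2 * j + 1 - i = Suc t" "2 * j + 1 - Suc i = t" using ij i unfolding t_def by auto
        have "adj E (f2 t) (f2 (Suc t))" using f2(3) t(1) by simp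
        then show ?thesis unfolding g_def using ij t adj_sym by auto
      qed
    qed
  qed
  have gc: "g (2 * j + 1) = g 0" unfolding g_def using f1 f2 by simp
  obtain C0 where C0: "is_cycle V E C0" "odd (length C0)" "length C0 \<le> 2 * j + 1"
    using odd_closed_walk[OF sg, of "2 * j + 1" g] gw gc by auto
  obtain C where C: "is_cycle V E C" "odd (length C)"
    and Cmin: "\<forall>C'. is_cycle V E C' \<and> odd (length C') \<longrightarrow> length C \<le> length C'"
    using ex_has_least_nat[of "\<lambda>C. is_cycle V E C \<and> odd (length C)" C0 length] C0 by blast
  have LC: "length C \<le> 4 * R0 + 1" using Cmin C0 jR by fastforce
  have n3: "n \<ge> 3"
  proof -
    have "length C = card (set C)" using C(1) unfolding is_cycle_def by (simp add: distinct_card)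
    also have "\<dots> \<le> n" unfolding n_def using C(1) finV unfolding is_cycle_def by (intro card_mono) auto
    finally show ?thesis using C(1) unfolding is_cycle_def by simp
  qed
  have lnn1: "ln (real n) \<ge> 1"
  proof -
    have "exp 1 \<le> real n" using exp_le n3 by linarith
    then show ?thesis using n1 by (simp add: ln_ge_iff)
  qed
  have bound: "real (length C) \<le> 88 * ln k * ln (real (card V))"
  proof -
    have l1: "(4/5) * x \<le> ln (1 + x)"
    proof -
      have "x - x\<^sup>2 \<le> ln (1 + x)" using x0 by (intro ln_one_plus_pos_lower_bound) auto
      moreover have "(4/5) * x \<le> x - x\<^sup>2" using x0 by (simp add: power2_eq_square)
      ultimately show ?thesis by linarith
    qed
    have "ln (real n) / ln (1 + x) \<le> ln (real n) / ((4/5) * x)"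
      using l1 lnn x0 by (intro divide_left_mono) auto
    also have "\<dots> = (25/2) * K * ln (real n)" unfolding x_def using K2 by (simp add: field_simps)
    finally have "real R0 \<le> (25/2) * K * ln (real n) + 1" using R0le by linarith
    then have "real (length C) \<le> 50 * K * ln (real n) + 5" using LC by linarith
    moreover have "K * ln (real n) \<ge> 1/2" using K2 lnn1
      using mult_mono[of "1/2" K 1 "ln (real n)"] by simp
    ultimately show ?thesis unfolding K_def n_def by linarith
  qed
  have exp': "expands_into V E (\<Delta> - 3) \<beta> d k (W - set C)"
    unfolding expands_into_def
  proof (intro conjI allI impI)
    fix S assume S: "S \<subseteq> V \<and> real (card S) \<le> \<beta> * d"
    have finS: "finite S" using S finV finite_subset by blast
    define A where "A = nbhd V E S \<inter> W"
    have finA: "finite A" unfolding A_def nbhd_def using finV by simp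
    have eq: "nbhd V E S \<inter> (W - set C) = A - (A \<inter> set C)" unfolding A_def by auto
    have sub: "A \<inter> set C \<subseteq> (\<Union>y\<in>S. {c \<in> set C. adj E y c})"
      unfolding A_def nbhd_def by auto
    have "card (A \<inter> set C) \<le> card (\<Union>y\<in>S. {c \<in> set C. adj E y c})"
      using sub finS by (intro card_mono) auto
    also have "\<dots> \<le> (\<Sum>y\<in>S. card {c \<in> set C. adj E y c})" using finS by (rule card_UN_le)
    also have "\<dots> \<le> (\<Sum>y\<in>S. 3)" using nbr_cycle[OF sg C Cmin] by (intro sum_mono) auto
    finally have c3: "card (A \<inter> set C) \<le> 3 * card S" by simp
    have "card (A - (A \<inter> set C)) = card A - card (A \<inter> set C)"
      using finA by (intro card_Diff_subset) auto
    moreover have "card (A \<inter> set C) \<le> card A" using finA by (intro card_mono) auto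
    ultimately have "real (card (A - (A \<inter> set C))) = real (card A) - real (card (A \<inter> set C))" by simp
    moreover have "\<Delta> * real (card S) \<le> real (card A)" using ea S unfolding A_def by blast
    moreover have "real (card (A \<inter> set C)) \<le> 3 * real (card S)" using c3 by linarith
    ultimately show "(\<Delta> - 3) * real (card S) \<le> real (card (nbhd V E S \<inter> (W - set C)))"
      unfolding eq by (simp add: algebra_simps)
  next
    fix S assume "S \<subseteq> V \<and> \<beta> * d \<le> real (card S) \<and> real (card S) \<le> real (card V) / 2"
    then show "real (card S) / (10 * ln k) \<le> real (card (nbhd V E S))" using eb by blast
  qed
  show ?thesis using C bound exp' by blast
qed
end
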